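(* Let $k_1,\dots,k_{10}$ be smooth functions of $(t,r)$ (the coefficients of a spherically symmetric torsion-free connection with $k_{11}=k_{12}=0$, as in the context), and assume $k_{10}\neq0$. Then the following statements are equivalent: 1. $A=B=C=D=E=F=0$; 2. $[\delta_t,\delta_r]=\alpha\,\delta_w$ for some function $\alpha$ (possibly depending on $(t,r,\dot t,\dot r,w)$), where either $\alpha=0$ or $b=c=0$.
   Context: Coordinates $(t,r,\theta,\phi)$ on a 4-dimensional chart domain, induced velocity coordinates, $w^2=\dot\theta^2+\sin^2\theta\,\dot\phi^2$. The connection has nonzero coefficients $\Gamma^t_{tt}=k_1$, $\Gamma^t_{tr}=k_2$, $\Gamma^t_{rr}=k_3$, $\Gamma^r_{tt}=k_4$, $\Gamma^r_{rr}=k_5$, $\Gamma^r_{tr}=k_6$, $\Gamma^t_{\theta\theta}=k_7$, $\Gamma^t_{\phi\phi}=k_7\sin^2\theta$, $\Gamma^\theta_{\theta t}=\Gamma^\phi_{\phi t}=k_8$, $\Gamma^\theta_{\theta r}=\Gamma^\phi_{\phi r}=k_9$, $\Gamma^r_{\theta\theta}=k_{10}$, $\Gamma^r_{\phi\phi}=k_{10}\sin^2\theta$, $\Gamma^\phi_{\theta\phi}=\cot\theta$, $\Gamma^\theta_{\phi\phi}=-\sin\theta\cos\theta$ (symmetric in lower indices). Vector fields in the variables $(t,r,\dot t,\dot r,w)$: $\delta_t=\partial_t-(k_1\dot t+k_2\dot r)\dot\partial_t-(k_4\dot t+k_6\dot r)\dot\partial_r-k_8w\partial_w$, $\delta_r=\partial_r-(k_2\dot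 t+k_3\dot r)\dot\partial_t-(k_6\dot t+k_5\dot r)\dot\partial_r-k_9w\partial_w$, $\delta_w=wk_7\dot\partial_t+wk_{10}\dot\partial_r+(k_8\dot t+k_9\dot r)\partial_w$. Coefficients (subscripts ${}_{,t},{}_{,r}$ denote partial derivatives): $a_1=k_{1,r}-k_{2,t}+k_3k_4-k_2k_6$, $a_2=k_{2,r}-k_{3,t}+k_2^2+k_3k_6-k_1k_3-k_2k_5$, $a_3=k_{4,r}-k_{6,t}+k_1k_6+k_4k_5-k_2k_4-k_6^2$, $a_4=k_{6,r}-k_{5,t}+k_2k_6-k_3k_4$, $a_5=k_{8,r}-k_{9,t}$. Set $a=k_7/k_{10}$, $b=k_8/k_{10}$, $c=(k_9k_{10}-k_7k_8)/k_{10}^2$ and $A=b(aa_1+a_2)+(ab+c)(aa_3+a_4)-a_5(2ab+c)$, $B=a(aa_3+a_4)-(aa_1+a_2)$, $C=(ab+c)a_3+b(aa_3+a_4)+b(a_1-2a_5)$, $D=aa_3-a_1+a_5$, $E=ba_3$, $F=aa_3-a_1$. *)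

theory Defs
  imports "HOL-Analysis.Analysis"
begin

(* Coinductive = all orders of differentiability. *)
coinductive smooth_on :: "'a::euclidean_space set \<Rightarrow> ('a \<Rightarrow> real) \<Rightarrow> bool" where
  "f differentiable_on U \<Longrightarrow>
   (\<forall>b\<in>Basis. smooth_on U (\<lambda>x. frechet_derivative f (at x) b)) \<Longrightarrow>
   smooth_on U f"

(* Coefficient functions k i : (t,r) \<mapsto> k_i(t,r), i = 1..10 *)
type_synonym coeffs = "nat \<Rightarrow> real \<times> real \<Rightarrow> real"

definition dt :: "(real \<times> real \<Rightarrow> real) \<Rightarrow> real \<times> real \<Rightarrow> real" where
  "dt f x = deriv (\<lambda>s. f (s, snd x)) (fst x)"
definition dr :: "(real \<times> real \<Rightarrow> real) \<Rightarrow> real \<times> real \<Rightarrow> real" where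
  "dr f x = deriv (\<lambda>s. f (fst x, s)) (snd x)"

definition a1 :: "coeffs \<Rightarrow> real \<times> real \<Rightarrow> real" where
  "a1 k x = dr (k 1) x - dt (k 2) x + k 3 x * k 4 x - k 2 x * k 6 x"
definition a2 :: "coeffs \<Rightarrow> real \<times> real \<Rightarrow> real" where
  "a2 k x = dr (k 2) x - dt (k 3) x + (k 2 x)^2 + k 3 x * k 6 x - k 1 x * k 3 x - k 2 x * k 5 x"
definition a3 :: "coeffs \<Rightarrow> real \<times> real \<Rightarrow> real" where
  "a3 k x = dr (k 4) x - dt (k 6) x + k 1 x * k 6 x + k 4 x * k 5 x - k 2 x * k 4 x - (k 6 x)^2"
definition a4 :: "coeffs \<Rightarrow> real \<times> real \<Rightarrow> real" where
  "a4 k x = dr (k 6) x - dt (k 5) x + k 2 x * k 6 x - k 3 x * k 4 x"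
definition a5 :: "coeffs \<Rightarrow> real \<times> real \<Rightarrow> real" where
  "a5 k x = dr (k 8) x - dt (k 9) x"

definition ca :: "coeffs \<Rightarrow> real \<times> real \<Rightarrow> real" where
  "ca k x = k 7 x / k 10 x"
definition cb :: "coeffs \<Rightarrow> real \<times> real \<Rightarrow> real" where
  "cb k x = k 8 x / k 10 x"
definition cc :: "coeffs \<Rightarrow> real \<times> real \<Rightarrow> real" where
  "cc k x = (k 9 x * k 10 x - k 7 x * k 8 x) / (k 10 x)^2"

definition cA :: "coeffs \<Rightarrow> real \<times> real \<Rightarrow> real" where
  "cA k x = (let a = ca k x; b = cb k x; c = cc k x in
     b * (a * a1 k x + a2 k x) + (a * b + c) * (a * a3 k x + a4 k x) - a5 k x * (2 * a * b + c))"
definition cB :: "coeffs \<Rightarrow> real \<times> real \<Rightarrow> real" where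
  "cB k x = (let a = ca k x in a * (a * a3 k x + a4 k x) - (a * a1 k x + a2 k x))"
definition cC :: "coeffs \<Rightarrow> real \<times> real \<Rightarrow> real" where
  "cC k x = (let a = ca k x; b = cb k x; c = cc k x in
     (a * b + c) * a3 k x + b * (a * a3 k x + a4 k x) + b * (a1 k x - 2 * a5 k x))"
definition cD :: "coeffs \<Rightarrow> real \<times> real \<Rightarrow> real" where
  "cD k x = ca k x * a3 k x - a1 k x + a5 k x"
definition cE :: "coeffs \<Rightarrow> real \<times> real \<Rightarrow> real" where
  "cE k x = cb k x * a3 k x"
definition cF :: "coeffs \<Rightarrow> real \<times> real \<Rightarrow> real" where
  "cF k x = ca k x * a3 k x - a1 k x"

(* Points of the 5-dimensional space: p$1 = t, p$2 = r, p$3 = tdot, p$4 = rdot, p$5 = w.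
   Vector fields are given by their coefficient vectors w.r.t.
   (d_t, d_r, d_tdot, d_rdot, d_w). *)
type_synonym pt5 = "real^5"

definition tr :: "pt5 \<Rightarrow> real \<times> real" where
  "tr p = (p$1, p$2)"

definition partial5 :: "5 \<Rightarrow> (pt5 \<Rightarrow> real) \<Rightarrow> pt5 \<Rightarrow> real" where
  "partial5 i f p = deriv (\<lambda>s. f (p + s *\<^sub>R axis i 1)) 0"

definition vf_apply :: "(pt5 \<Rightarrow> pt5) \<Rightarrow> (pt5 \<Rightarrow> real) \<Rightarrow> pt5 \<Rightarrow> real" where
  "vf_apply X f p = (\<Sum>j\<in>UNIV. X p $ j * partial5 j f p)"

definition lie_bracket :: "(pt5 \<Rightarrow> pt5) \<Rightarrow> (pt5 \<Rightarrow> pt5) \<Rightarrow> pt5 \<Rightarrow> pt5" where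
  "lie_bracket X Y p = (\<chi> i. vf_apply X (\<lambda>q. Y q $ i) p - vf_apply Y (\<lambda>q. X q $ i) p)"

definition delta_t :: "coeffs \<Rightarrow> pt5 \<Rightarrow> pt5" where
  "delta_t k p = (let x = tr p; u = p$3; v = p$4; w = p$5 in
     vector [1, 0, -(k 1 x * u + k 2 x * v), -(k 4 x * u + k 6 x * v), - k 8 x * w])"
definition delta_r :: "coeffs \<Rightarrow> pt5 \<Rightarrow> pt5" where
  "delta_r k p = (let x = tr p; u = p$3; v = p$4; w = p$5 in
     vector [0, 1, -(k 2 x * u + k 3 x * v), -(k 6 x * u + k 5 x * v), - k 9 x * w])"
definition delta_w :: "coeffs \<Rightarrow> pt5 \<Rightarrow> pt5" where
  "delta_w k p = (let x = tr p; u = p$3; v = p$4; w = p$5 in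
     vector [0, 0, w * k 7 x, w * k 10 x, k 8 x * u + k 9 x * v])"

definition phase_dom :: "(real \<times> real) set \<Rightarrow> pt5 set" where
  "phase_dom U = {p. tr p \<in> U \<and> p$5 > 0}"

end

theory Submission
  imports Defs
begin


lemma partial5_deriv:
  assumes "(f has_derivative f') (at p)"
  shows "partial5 j f p = f' (axis j 1)"
proof -
  have l: "linear f'" using assms has_derivative_linear by blast
  have h1: "((\<lambda>s::real. p + s *\<^sub>R axis j 1) has_derivative (\<lambda>s. s *\<^sub>R axis j 1)) (at 0)"
    by (auto intro!: derivative_eq_intros)
  have "((f \<circ> (\<lambda>s::real. p + s *\<^sub>R axis j 1)) has_derivative (f' \<circ> (\<lambda>s. s *\<^sub>R axis j 1))) (at 0)"
    by (rule diff_chain_at[OF h1]) (simp add: assms)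
  moreover have "(f' \<circ> (\<lambda>s. s *\<^sub>R axis j 1)) = (\<lambda>s. f' (axis j 1) * s)"
    using linear_scale[OF l] by (auto simp: fun_eq_iff)
  ultimately have "((\<lambda>s. f (p + s *\<^sub>R axis j 1)) has_field_derivative f' (axis j 1)) (at 0)"
    by (simp add: has_field_derivative_def o_def)
  then show ?thesis unfolding partial5_def by (rule DERIV_imp_deriv)
qed

lemma vf_apply_deriv:
  assumes "(f has_derivative f') (at p)"
  shows "vf_apply X f p = f' (X p)"
proof -
  have l: "linear f'" using assms has_derivative_linear by blast
  have "vf_apply X f p = (\<Sum>j\<in>UNIV. X p $ j * f' (axis j 1))"
    unfolding vf_apply_def using partial5_deriv[OF assms] by simp
  also have "\<dots> = (\<Sum>j\<in>UNIV. f' (X p $ j *\<^sub>R axis j 1))"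
    using linear_scale[OF l] by simp
  also have "\<dots> = f' (\<Sum>j\<in>UNIV. X p $ j *\<^sub>R axis j 1)"
    by (subst linear_sum[OF l]) simp
  also have "(\<Sum>j\<in>UNIV. X p $ j *\<^sub>R axis j 1) = X p"
    using basis_expansion[of "X p"] by (simp add: scalar_mult_eq_scaleR)
  finally show ?thesis .
qed


lemma frechet_pair:
  fixes g :: "real \<times> real \<Rightarrow> real"
  assumes "g differentiable (at x)"
  shows "frechet_derivative g (at x) (a, b) = a * dt g x + b * dr g x"
proof -
  define G where "G = frechet_derivative g (at x)"
  have gd: "(g has_derivative G) (at x)" using assms frechet_derivative_works G_def by blast
  have l: "linear G" using gd has_derivative_linear by blast
  have sc: "G (c *\<^sub>R v) = c * G v" for c v using linear_scale[OF l] by simp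
  have ad: "G (v + w) = G v + G w" for v w using linear_add[OF l] by simp
  have e1: "(s, 0) = s *\<^sub>R (1::real, 0::real)" for s :: real by simp
  have e2: "(0, s) = s *\<^sub>R (0::real, 1::real)" for s :: real by simp
  have h1: "((\<lambda>s. (s, snd x)) has_derivative (\<lambda>s. (s, 0))) (at (fst x))"
    by (intro has_derivative_Pair has_derivative_ident has_derivative_const)
  have "((g \<circ> (\<lambda>s. (s, snd x))) has_derivative (G \<circ> (\<lambda>s. (s, 0)))) (at (fst x))"
    by (rule diff_chain_at[OF h1]) (simp add: gd)
  moreover have "G \<circ> (\<lambda>s. (s, 0)) = (\<lambda>s. G (1,0) * s)"
    unfolding o_def fun_eq_iff by (metis e1 sc mult.commute)
  ultimately have "((\<lambda>s. g (s, snd x)) has_field_derivative G (1,0)) (at (fst x))"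
    by (simp add: has_field_derivative_def o_def)
  then have dtg: "dt g x = G (1,0)" unfolding dt_def by (rule DERIV_imp_deriv)
  have h2: "((\<lambda>s. (fst x, s)) has_derivative (\<lambda>s. (0, s))) (at (snd x))"
    by (intro has_derivative_Pair has_derivative_ident has_derivative_const)
  have "((g \<circ> (\<lambda>s. (fst x, s))) has_derivative (G \<circ> (\<lambda>s. (0, s)))) (at (snd x))"
    by (rule diff_chain_at[OF h2]) (simp add: gd)
  moreover have "G \<circ> (\<lambda>s. (0, s)) = (\<lambda>s. G (0,1) * s)"
    unfolding o_def fun_eq_iff by (metis e2 sc mult.commute)
  ultimately have "((\<lambda>s. g (fst x, s)) has_field_derivative G (0,1)) (at (snd x))"
    by (simp add: has_field_derivative_def o_def)
  then have drg: "dr g x = G (0,1)" unfolding dr_def by (rule DERIV_imp_deriv)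
  have "(a, b) = a *\<^sub>R (1::real,0::real) + b *\<^sub>R (0,1)" by simp
  then have "G (a, b) = a * G (1,0) + b * G (0,1)" by (metis sc ad)
  then show ?thesis using dtg drg G_def by simp
qed

lemma tr_deriv:
  fixes g :: "real \<times> real \<Rightarrow> real"
  assumes "g differentiable (at (tr p))"
  shows "((\<lambda>q. g (tr q)) has_derivative (\<lambda>h. frechet_derivative g (at (tr p)) (tr h))) (at p)"
proof -
  have bl: "bounded_linear tr" unfolding tr_def
    by (intro bounded_linear_Pair bounded_linear_vec_nth)
  have "(tr has_derivative tr) (at p)" using bl by (rule bounded_linear_imp_has_derivative)
  moreover have "(g has_derivative frechet_derivative g (at (tr p))) (at (tr p))"
    using assms frechet_derivative_works by blast
  ultimately have "((\<lambda>q. g (tr q)) has_derivative (frechet_derivative g (at (tr p)) \<circ> tr)) (at p)"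
    using diff_chain_at[of tr tr p g] by (simp add: o_def)
  then show ?thesis by (simp add: o_def)
qed


lemma alg_fwd:
  fixes a b c e1 e2 e3 e4 e5 :: real
  assumes A: "b * (a * e1 + e2) + (a * b + c) * (a * e3 + e4) - e5 * (2 * a * b + c) = 0"
    and B: "a * (a * e3 + e4) - (a * e1 + e2) = 0"
    and C: "(a * b + c) * e3 + b * (a * e3 + e4) + b * (e1 - 2 * e5) = 0"
    and D: "a * e3 - e1 + e5 = 0" and E: "b * e3 = 0" and F: "a * e3 - e1 = 0"
  shows "e5 = 0 \<and> e1 = a * e3 \<and> e2 = a * e4 \<and> ((b \<noteq> 0 \<or> c \<noteq> 0) \<longrightarrow> e1 = 0 \<and> e2 = 0 \<and> e3 = 0 \<and> e4 = 0)"
proof -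
  have 5: "e5 = 0" using D F by linarith
  have 1: "e1 = a * e3" using F by linarith
  have 2: "e2 = a * e4" using B 1 by (simp add: algebra_simps)
  have "e3 = 0 \<and> e4 = 0" if "b \<noteq> 0 \<or> c \<noteq> 0"
  proof (cases "b = 0")
    case False
    then have 3: "e3 = 0" using E by simp
    then have "b * e4 = 0" using C 1 5 by simp
    then show ?thesis using 3 False by simp
  next
    case True
    then have c: "c \<noteq> 0" using that by simp
    then have 3: "e3 = 0" using C True by simp
    then have "c * e4 = 0" using A True 5 by simp
    then show ?thesis using 3 c by simp
  qed
  then show ?thesis using 1 2 5 by simp
qed

lemma alg_bwd:
  fixes a b c e1 e2 e3 e4 e5 :: real
  assumes "(b = 0 \<and> c = 0 \<and> e5 = 0 \<and> e1 = a * e3 \<and> e2 = a * e4) \<or> (e1 = 0 \<and> e2 = 0 \<and> e3 = 0 \<and> e4 = 0 \<and> e5 = 0)"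
  shows "b * (a * e1 + e2) + (a * b + c) * (a * e3 + e4) - e5 * (2 * a * b + c) = 0"
    and "a * (a * e3 + e4) - (a * e1 + e2) = 0"
    and "(a * b + c) * e3 + b * (a * e3 + e4) + b * (e1 - 2 * e5) = 0"
    and "a * e3 - e1 + e5 = 0" and "b * e3 = 0" and "a * e3 - e1 = 0"
  using assms by (auto simp: algebra_simps)


lemma vector_5:
 "(vector [a,b,c,d,e] ::real^5)$1 = a"
 "(vector [a,b,c,d,e] ::real^5)$2 = b"
 "(vector [a,b,c,d,e] ::real^5)$3 = c"
 "(vector [a,b,c,d,e] ::real^5)$4 = d"
 "(vector [a,b,c,d,e] ::real^5)$5 = e"
  unfolding vector_def by simp_all

lemma exhaust_5: fixes x :: 5 shows "x = 1 \<or> x = 2 \<or> x = 3 \<or> x = 4 \<or> x = 5"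
proof (induct x)
  case (of_int z)
  then have "z = 0 | z = 1 | z = 2 | z = 3 | z = 4" by auto
  then show ?case by auto
qed

lemma nth_deriv: "((\<lambda>q::real^5. q $ m) has_derivative (\<lambda>h. h $ m)) (at p)"
  by (rule bounded_linear_imp_has_derivative) (rule bounded_linear_vec_nth)

lemma vf2:
  assumes "g1 differentiable (at (tr p))" "g2 differentiable (at (tr p))"
  shows "vf_apply X (\<lambda>q. -(g1 (tr q) * q$m + g2 (tr q) * q$n)) p =
    -((X p$1 * dt g1 (tr p) + X p$2 * dr g1 (tr p)) * p$m + g1 (tr p) * X p$m
     + ((X p$1 * dt g2 (tr p) + X p$2 * dr g2 (tr p)) * p$n + g2 (tr p) * X p$n))"
proof -
  have d: "((\<lambda>q. -(g1 (tr q) * q$m + g2 (tr q) * q$n)) has_derivative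
     (\<lambda>h. -((g1 (tr p) * h$m + frechet_derivative g1 (at (tr p)) (tr h) * p$m)
          + (g2 (tr p) * h$n + frechet_derivative g2 (at (tr p)) (tr h) * p$n)))) (at p)"
    by (intro has_derivative_minus has_derivative_add has_derivative_mult
        tr_deriv assms nth_deriv)
  show ?thesis using vf_apply_deriv[OF d]
    by (simp add: tr_def frechet_pair assms[unfolded tr_def] algebra_simps)
qed

lemma vf1:
  assumes "g differentiable (at (tr p))"
  shows "vf_apply X (\<lambda>q. - g (tr q) * q$m) p =
    -((X p$1 * dt g (tr p) + X p$2 * dr g (tr p)) * p$m + g (tr p) * X p$m)"
proof -
  have d: "((\<lambda>q. -(g (tr q) * q$m)) has_derivative
     (\<lambda>h. -((g (tr p) * h$m + frechet_derivative g (at (tr p)) (tr h) * p$m)))) (at p)"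
    by (intro has_derivative_minus has_derivative_add has_derivative_mult
        tr_deriv assms nth_deriv)
  show ?thesis using vf_apply_deriv[OF d]
    by (simp add: tr_def frechet_pair assms[unfolded tr_def] algebra_simps)
qed

lemma vfc: "vf_apply X (\<lambda>q. c) p = 0"
  unfolding vf_apply_def partial5_def by simp

lemma bracket:
  assumes "\<forall>i\<in>{1..10}. k i differentiable (at (tr p))"
  shows "lie_bracket (delta_t k) (delta_r k) p =
    vector [0, 0, a1 k (tr p) * p$3 + a2 k (tr p) * p$4,
                  a3 k (tr p) * p$3 + a4 k (tr p) * p$4, a5 k (tr p) * p$5]"
proof -
  have D: "k i differentiable (at (tr p))" if "1 \<le> i" "i \<le> 10" for i using assms that by auto
  have t1: "(\<lambda>q. delta_t k q $ 1) = (\<lambda>q. 1)" by (simp add: delta_t_def Let_def vector_5)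
  have t2: "(\<lambda>q. delta_t k q $ 2) = (\<lambda>q. 0)" by (simp add: delta_t_def Let_def vector_5)
  have t3: "(\<lambda>q. delta_t k q $ 3) = (\<lambda>q. -(k 1 (tr q) * q$3 + k 2 (tr q) * q$4))"
    by (simp add: delta_t_def Let_def vector_5)
  have t4: "(\<lambda>q. delta_t k q $ 4) = (\<lambda>q. -(k 4 (tr q) * q$3 + k 6 (tr q) * q$4))"
    by (simp add: delta_t_def Let_def vector_5)
  have t5: "(\<lambda>q. delta_t k q $ 5) = (\<lambda>q. - k 8 (tr q) * q$5)"
    by (simp add: delta_t_def Let_def vector_5)
  have r1: "(\<lambda>q. delta_r k q $ 1) = (\<lambda>q. 0)" by (simp add: delta_r_def Let_def vector_5)
  have r2: "(\<lambda>q. delta_r k q $ 2) = (\<lambda>q. 1)" by (simp add: delta_r_def Let_def vector_5)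
  have r3: "(\<lambda>q. delta_r k q $ 3) = (\<lambda>q. -(k 2 (tr q) * q$3 + k 3 (tr q) * q$4))"
    by (simp add: delta_r_def Let_def vector_5)
  have r4: "(\<lambda>q. delta_r k q $ 4) = (\<lambda>q. -(k 6 (tr q) * q$3 + k 5 (tr q) * q$4))"
    by (simp add: delta_r_def Let_def vector_5)
  have r5: "(\<lambda>q. delta_r k q $ 5) = (\<lambda>q. - k 9 (tr q) * q$5)"
    by (simp add: delta_r_def Let_def vector_5)
  have T: "delta_t k p $ 1 = 1" "delta_t k p $ 2 = 0"
     "delta_t k p $ 3 = -(k 1 (tr p) * p$3 + k 2 (tr p) * p$4)"
     "delta_t k p $ 4 = -(k 4 (tr p) * p$3 + k 6 (tr p) * p$4)"
     "delta_t k p $ 5 = - k 8 (tr p) * p$5"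
    by (simp_all add: delta_t_def Let_def vector_5)
  have R: "delta_r k p $ 1 = 0" "delta_r k p $ 2 = 1"
     "delta_r k p $ 3 = -(k 2 (tr p) * p$3 + k 3 (tr p) * p$4)"
     "delta_r k p $ 4 = -(k 6 (tr p) * p$3 + k 5 (tr p) * p$4)"
     "delta_r k p $ 5 = - k 9 (tr p) * p$5"
    by (simp_all add: delta_r_def Let_def vector_5)
  have Dk: "k 1 differentiable (at (tr p))" "k 2 differentiable (at (tr p))"
    "k 3 differentiable (at (tr p))" "k 4 differentiable (at (tr p))"
    "k 5 differentiable (at (tr p))" "k 6 differentiable (at (tr p))"
    "k 8 differentiable (at (tr p))" "k 9 differentiable (at (tr p))"
    using D by auto
  have B3a: "vf_apply (delta_t k) (\<lambda>q. delta_r k q $ 3) p =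
    -((delta_t k p$1 * dt (k 2) (tr p) + delta_t k p$2 * dr (k 2) (tr p)) * p$3 + k 2 (tr p) * delta_t k p$3
     + ((delta_t k p$1 * dt (k 3) (tr p) + delta_t k p$2 * dr (k 3) (tr p)) * p$4 + k 3 (tr p) * delta_t k p$4))"
    unfolding r3 by (rule vf2[OF Dk(2) Dk(3)])
  have B3b: "vf_apply (delta_r k) (\<lambda>q. delta_t k q $ 3) p =
    -((delta_r k p$1 * dt (k 1) (tr p) + delta_r k p$2 * dr (k 1) (tr p)) * p$3 + k 1 (tr p) * delta_r k p$3
     + ((delta_r k p$1 * dt (k 2) (tr p) + delta_r k p$2 * dr (k 2) (tr p)) * p$4 + k 2 (tr p) * delta_r k p$4))"
    unfolding t3 by (rule vf2[OF Dk(1) Dk(2)])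
  have B4a: "vf_apply (delta_t k) (\<lambda>q. delta_r k q $ 4) p =
    -((delta_t k p$1 * dt (k 6) (tr p) + delta_t k p$2 * dr (k 6) (tr p)) * p$3 + k 6 (tr p) * delta_t k p$3
     + ((delta_t k p$1 * dt (k 5) (tr p) + delta_t k p$2 * dr (k 5) (tr p)) * p$4 + k 5 (tr p) * delta_t k p$4))"
    unfolding r4 by (rule vf2[OF Dk(6) Dk(5)])
  have B4b: "vf_apply (delta_r k) (\<lambda>q. delta_t k q $ 4) p =
    -((delta_r k p$1 * dt (k 4) (tr p) + delta_r k p$2 * dr (k 4) (tr p)) * p$3 + k 4 (tr p) * delta_r k p$3
     + ((delta_r k p$1 * dt (k 6) (tr p) + delta_r k p$2 * dr (k 6) (tr p)) * p$4 + k 6 (tr p) * delta_r k p$4))"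
    unfolding t4 by (rule vf2[OF Dk(4) Dk(6)])
  have B5a: "vf_apply (delta_t k) (\<lambda>q. delta_r k q $ 5) p =
    -((delta_t k p$1 * dt (k 9) (tr p) + delta_t k p$2 * dr (k 9) (tr p)) * p$5 + k 9 (tr p) * delta_t k p$5)"
    unfolding r5 by (rule vf1[OF Dk(8)])
  have B5b: "vf_apply (delta_r k) (\<lambda>q. delta_t k q $ 5) p =
    -((delta_r k p$1 * dt (k 8) (tr p) + delta_r k p$2 * dr (k 8) (tr p)) * p$5 + k 8 (tr p) * delta_r k p$5)"
    unfolding t5 by (rule vf1[OF Dk(7)])
  have "lie_bracket (delta_t k) (delta_r k) p $ i =
    vector [0, 0, a1 k (tr p) * p$3 + a2 k (tr p) * p$4,
                  a3 k (tr p) * p$3 + a4 k (tr p) * p$4, a5 k (tr p) * p$5] $ i" for i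
  proof -
    from exhaust_5[of i] show ?thesis
    proof (elim disjE)
      assume "i = 1" then show ?thesis
        by (simp add: lie_bracket_def vector_5 t1 r1 vfc)
    next
      assume "i = 2" then show ?thesis
        by (simp add: lie_bracket_def vector_5 t2 r2 vfc)
    next
      assume "i = 3" then show ?thesis
        unfolding \<open>i = 3\<close> lie_bracket_def vec_lambda_beta B3a B3b T R by (simp add: vector_5 a1_def a2_def algebra_simps power2_eq_square)
    next
      assume "i = 4" then show ?thesis
        unfolding \<open>i = 4\<close> lie_bracket_def vec_lambda_beta B4a B4b T R by (simp add: vector_5 a3_def a4_def algebra_simps power2_eq_square)
    next
      assume "i = 5" then show ?thesis
        unfolding \<open>i = 5\<close> lie_bracket_def vec_lambda_beta B5a B5b T R by (simp add: vector_5 a5_def algebra_simps)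
    qed
  qed
  then show ?thesis by (simp add: vec_eq_iff)
qed


lemma forall_5: "(\<forall>i::5. P i) \<longleftrightarrow> P 1 \<and> P 2 \<and> P 3 \<and> P 4 \<and> P 5"
  by (metis exhaust_5)

lemma vec5_eq:
  "(vector [x1,x2,x3,x4,x5] :: real^5) = s *\<^sub>R vector [y1,y2,y3,y4,y5] \<longleftrightarrow>
    x1 = s * y1 \<and> x2 = s * y2 \<and> x3 = s * y3 \<and> x4 = s * y4 \<and> x5 = s * y5"
  unfolding vec_eq_iff forall_5 by (simp add: vector_5)

lemma delta_w_eq: "delta_w k p = vector [0, 0, p$5 * k 7 (tr p), p$5 * k 10 (tr p), k 8 (tr p) * p$3 + k 9 (tr p) * p$4]"
  by (simp add: delta_w_def Let_def)

lemma aux: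
  fixes e1 e2 e3 e4 k7 k10 u v w :: real
  assumes "e1 * k10 = e3 * k7" "e2 * k10 = e4 * k7"
  shows "e1 * (u * (w * k10)) + e2 * (v * (w * k10)) = e3 * (u * (w * k7)) + e4 * (v * (w * k7))"
proof -
  have "e1 * (u * (w * k10)) + e2 * (v * (w * k10)) = u * w * (e1 * k10) + v * w * (e2 * k10)" by (simp add: algebra_simps)
  also have "\<dots> = u * w * (e3 * k7) + v * w * (e4 * k7)" using assms by simp
  finally show ?thesis by (simp add: algebra_simps)
qed
theorem lemma3:
  fixes k :: "nat \<Rightarrow> real \<times> real \<Rightarrow> real" and U :: "(real \<times> real) set"
  assumes "open U"
    and "\<forall>i\<in>{1..10}. smooth_on U (k i)"
    and "\<forall>x\<in>U. k 10 x \<noteq> 0"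
  shows "(\<forall>x\<in>U. cA k x = 0 \<and> cB k x = 0 \<and> cC k x = 0 \<and> cD k x = 0 \<and> cE k x = 0 \<and> cF k x = 0)
     \<longleftrightarrow> (\<exists>\<alpha> :: real^5 \<Rightarrow> real. \<forall>p\<in>phase_dom U.
            lie_bracket (delta_t k) (delta_r k) p = \<alpha> p *\<^sub>R delta_w k p
            \<and> (\<alpha> p = 0 \<or> (cb k (tr p) = 0 \<and> cc k (tr p) = 0)))"
proof -
  have diff: "\<forall>i\<in>{1..10}. k i differentiable (at x)" if "x \<in> U" for x
  proof
    fix i :: nat assume "i \<in> {1..10}"
    then have "smooth_on U (k i)" using assms(2) by blast
    then have "k i differentiable_on U" by (cases rule: smooth_on.cases) auto
    then show "k i differentiable (at x)"
      using differentiable_on_eq_differentiable_at[OF assms(1)] that by blast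
  qed
  have BR: "lie_bracket (delta_t k) (delta_r k) p =
    vector [0, 0, a1 k (tr p) * p$3 + a2 k (tr p) * p$4,
                  a3 k (tr p) * p$3 + a4 k (tr p) * p$4, a5 k (tr p) * p$5]"
    if "p \<in> phase_dom U" for p
    using that diff[of "tr p"] by (intro bracket) (auto simp: phase_dom_def)
  have bc: "k 8 x = 0 \<and> k 9 x = 0" if "x \<in> U" "cb k x = 0" "cc k x = 0" for x
  proof -
    have nz: "k 10 x \<noteq> 0" using assms(3) that(1) by blast
    then have 8: "k 8 x = 0" using that(2) by (simp add: cb_def)
    then have "k 9 x * k 10 x = 0" using that(3) nz by (simp add: cc_def)
    then show ?thesis using 8 nz by simp
  qed
  show ?thesis
  proof
    assume H: "\<forall>x\<in>U. cA k x = 0 \<and> cB k x = 0 \<and> cC k x = 0 \<and> cD k x = 0 \<and> cE k x = 0 \<and> cF k x = 0"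
    define \<alpha> where "\<alpha> p = (if cb k (tr p) = 0 \<and> cc k (tr p) = 0
       then (a3 k (tr p) * p$3 + a4 k (tr p) * p$4) / (p$5 * k 10 (tr p)) else 0)" for p :: "real^5"
    show "\<exists>\<alpha> :: real^5 \<Rightarrow> real. \<forall>p\<in>phase_dom U.
            lie_bracket (delta_t k) (delta_r k) p = \<alpha> p *\<^sub>R delta_w k p
            \<and> (\<alpha> p = 0 \<or> (cb k (tr p) = 0 \<and> cc k (tr p) = 0))"
    proof (intro exI[of _ \<alpha>] ballI)
      fix p assume p: "p \<in> phase_dom U"
      define x where "x = tr p"
      have xU: "x \<in> U" and w: "p$5 > 0" using p by (auto simp: phase_dom_def x_def)
      have nz: "k 10 x \<noteq> 0" using assms(3) xU by blast
      have F: "a5 k x = 0 \<and> a1 k x = ca k x * a3 k x \<and> a2 k x = ca k x * a4 k x \<and>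
        ((cb k x \<noteq> 0 \<or> cc k x \<noteq> 0) \<longrightarrow> a1 k x = 0 \<and> a2 k x = 0 \<and> a3 k x = 0 \<and> a4 k x = 0)"
        using H xU by (intro alg_fwd) (auto simp: cA_def cB_def cC_def cD_def cE_def cF_def Let_def)
      show "lie_bracket (delta_t k) (delta_r k) p = \<alpha> p *\<^sub>R delta_w k p
            \<and> (\<alpha> p = 0 \<or> (cb k (tr p) = 0 \<and> cc k (tr p) = 0))"
      proof (cases "cb k x = 0 \<and> cc k x = 0")
        case True
        then have 89: "k 8 x = 0" "k 9 x = 0" using bc xU by auto
        have "lie_bracket (delta_t k) (delta_r k) p = \<alpha> p *\<^sub>R delta_w k p"
          unfolding BR[OF p] delta_w_eq vec5_eq \<alpha>_def x_def[symmetric] using True 89 F nz w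
          apply (simp add: ca_def field_simps)
          apply (rule aux)
          using F nz by (auto simp: ca_def field_simps)
        then show ?thesis using True x_def by simp
      next
        case False
        then have "\<alpha> p = 0" unfolding \<alpha>_def x_def[symmetric] by auto
        moreover have "lie_bracket (delta_t k) (delta_r k) p = 0 *\<^sub>R delta_w k p"
          unfolding BR[OF p] delta_w_eq vec5_eq x_def[symmetric] using False F by simp
        ultimately show ?thesis by simp
      qed
    qed
  next
    assume "\<exists>\<alpha> :: real^5 \<Rightarrow> real. \<forall>p\<in>phase_dom U.
            lie_bracket (delta_t k) (delta_r k) p = \<alpha> p *\<^sub>R delta_w k p
            \<and> (\<alpha> p = 0 \<or> (cb k (tr p) = 0 \<and> cc k (tr p) = 0))"
    then obtain \<alpha> :: "real^5 \<Rightarrow> real" where H: "\<forall>p\<in>phase_dom U.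
            lie_bracket (delta_t k) (delta_r k) p = \<alpha> p *\<^sub>R delta_w k p
            \<and> (\<alpha> p = 0 \<or> (cb k (tr p) = 0 \<and> cc k (tr p) = 0))" by blast
    show "\<forall>x\<in>U. cA k x = 0 \<and> cB k x = 0 \<and> cC k x = 0 \<and> cD k x = 0 \<and> cE k x = 0 \<and> cF k x = 0"
    proof
      fix x assume xU: "x \<in> U"
      have nz: "k 10 x \<noteq> 0" using assms(3) xU by blast
      define p1 where "p1 = (vector [fst x, snd x, 1, 0, 1] :: real^5)"
      define p2 where "p2 = (vector [fst x, snd x, 0, 1, 1] :: real^5)"
      have tr1: "tr p1 = x" and tr2: "tr p2 = x" by (simp_all add: p1_def p2_def tr_def vector_5)
      have P1: "p1 \<in> phase_dom U" and P2: "p2 \<in> phase_dom U"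
        using xU tr1 tr2 by (auto simp: phase_dom_def p1_def p2_def vector_5)
      have c5: "p1$3 = 1" "p1$4 = 0" "p1$5 = 1" "p2$3 = 0" "p2$4 = 1" "p2$5 = 1"
        by (simp_all add: p1_def p2_def vector_5)
      have E1: "a1 k x = \<alpha> p1 * k 7 x" "a3 k x = \<alpha> p1 * k 10 x" "a5 k x = \<alpha> p1 * k 8 x"
      proof -
        have "lie_bracket (delta_t k) (delta_r k) p1 = \<alpha> p1 *\<^sub>R delta_w k p1" using H P1 by blast
        then show "a1 k x = \<alpha> p1 * k 7 x" "a3 k x = \<alpha> p1 * k 10 x" "a5 k x = \<alpha> p1 * k 8 x"
          unfolding BR[OF P1] delta_w_eq vec5_eq tr1 c5 by auto
      qed
      have E2: "a2 k x = \<alpha> p2 * k 7 x" "a4 k x = \<alpha> p2 * k 10 x" "a5 k x = \<alpha> p2 * k 9 x"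
      proof -
        have "lie_bracket (delta_t k) (delta_r k) p2 = \<alpha> p2 *\<^sub>R delta_w k p2" using H P2 by blast
        then show "a2 k x = \<alpha> p2 * k 7 x" "a4 k x = \<alpha> p2 * k 10 x" "a5 k x = \<alpha> p2 * k 9 x"
          unfolding BR[OF P2] delta_w_eq vec5_eq tr2 c5 by auto
      qed
      have "(cb k x = 0 \<and> cc k x = 0 \<and> a5 k x = 0 \<and> a1 k x = ca k x * a3 k x \<and> a2 k x = ca k x * a4 k x)
        \<or> (a1 k x = 0 \<and> a2 k x = 0 \<and> a3 k x = 0 \<and> a4 k x = 0 \<and> a5 k x = 0)"
      proof (cases "cb k x = 0 \<and> cc k x = 0")
        case True
        then have 89: "k 8 x = 0" "k 9 x = 0" using bc xU by auto
        then show ?thesis using True E1 E2 nz by (simp add: ca_def)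
      next
        case False
        then have "\<alpha> p1 = 0" "\<alpha> p2 = 0" using H P1 P2 tr1 tr2 by auto
        then show ?thesis using E1 E2 by simp
      qed
      note R = alg_bwd[OF this]
      show "cA k x = 0 \<and> cB k x = 0 \<and> cC k x = 0 \<and> cD k x = 0 \<and> cE k x = 0 \<and> cF k x = 0"
        using R by (simp add: cA_def cB_def cC_def cD_def cE_def cF_def Let_def)
    qed
  qed
qed

end
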